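(* Let $M\ge 1$ be an integer and let $\tau>0$, $P_0>0$, $\bar{P}>0$, $R_0>0$. Let $|h_0|^2,|h_1|^2,\dots,|h_M|^2$ be independent random variables, each exponentially distributed with mean $1$, and let $|h_{(1)}|^2\le\cdots\le|h_{(M)}|^2$ denote the order statistics of $|h_1|^2,\dots,|h_M|^2$. Let $N$ be the (random) number of indices $m\in\{1,\dots,M\}$ with $|h_m|^2<\tau$ (so the admitted users have gains $|h_{(1)}|^2,\dots,|h_{(N)}|^2$). Define the outage probability $$\mathbb{P}_0^{\mathrm{I,OL}}=\mathbb{P}\left(\log_2\left(1+\frac{|h_0|^2P_0}{\sum_{j=1}^{N}|h_{(j)}|^2\bar{P}+1}\right)<R_0\right),$$ where the empty sum (case $N=0$) equals $0$. Then, with $\epsilon_0=2^{R_0}-1$, \begin{align*} \mathbb{P}_0^{\mathrm{I,OL}} =& \sum_{n=1}^{M}\frac{M!}{n!(M-n)!}e^{-(M-n)\tau}\left(1-e^{-\tau}\right)^n \sum_{p=0}^{n} \frac{\binom{n}{p}(-1)^pe^{-p\tau}}{(1-e^{-\tau})^n}\left( \sum_{l=0}^{n-1} \frac{\epsilon_0P_0^{-1}\bar{P}\,e^{-\epsilon_0P_0^{-1}(1+\bar{P}p\tau)}}{(1+\epsilon_0P_0^{-1}\bar{P})^{l+1}} + e^{-\epsilon_0P_0^{-1}}-e^{-\epsilon_0P_0^{-1}(1+\bar{P}p\tau)}\right)\\ &+\left(1-e^{-\epsilon_0P_0^{-1}}\right). \end{align*}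
   Context: Uplink semi-grant-free NOMA model: a grant-based user $\mathrm{U}_0$ with channel $h_0$ and transmit SNR $P_0$, and $M$ grant-free users with channels $h_m$ and common transmit SNR $\bar{P}$; all channels are i.i.d. Rayleigh fading, so the channel gains $|h_m|^2$ are i.i.d. exponential with mean 1, and noise power is normalized to 1. In the "Type I open-loop" protocol the base station broadcasts a threshold $\tau$ and exactly the grant-free users whose channel gain is below $\tau$ transmit; the base station decodes $\mathrm{U}_0$'s signal first in successive interference cancellation, treating all admitted grant-free users' signals as interference, and $\mathrm{U}_0$ is in outage if its achievable rate is below its target rate $R_0$. *)

theory Defs
  imports "HOL-Probability.Probability"
begin

definition order_stat :: "real list \<Rightarrow> nat \<Rightarrow> real" where
  "order_stat xs j = sort xs ! (j - 1)"

definition admitted_count :: "nat \<Rightarrow> real \<Rightarrow> (nat \<Rightarrow> real) \<Rightarrow> nat" where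
  "admitted_count M \<tau> g = card {m \<in> {1..M}. g m < \<tau>}"

definition admitted_gain_sum :: "nat \<Rightarrow> real \<Rightarrow> (nat \<Rightarrow> real) \<Rightarrow> real" where
  "admitted_gain_sum M \<tau> g =
     (\<Sum>j = 1..admitted_count M \<tau> g. order_stat (map g [1..<M+1]) j)"

end

theory Submission
  imports Defs
begin


lemma geom_aux:
  fixes c :: real assumes "c > 0"
  shows "(\<Sum>l<n. 1 / (1 + c) ^ (l + 1)) = (1 - (1 / (1 + c)) ^ n) / c"
proof (induction n)
  case 0 then show ?case by simp
next
  case (Suc n)
  define r where "r = 1 / (1 + c)"
  have r: "\<And>k::nat. 1 / (1 + c) ^ k = r ^ k" by (simp add: r_def power_one_over)
  have cr: "c * r = 1 - r" using assms by (simp add: r_def field_simps)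
  have "(\<Sum>l<Suc n. 1 / (1 + c) ^ (l + 1)) = (1 - (1/(1+c)) ^ n) / c + 1 / (1 + c) ^ (n + 1)"
    by (simp only: sum.lessThan_Suc Suc.IH)
  also have "\<dots> = (1 - r ^ n) / c + r ^ n * r"
    unfolding r_def[symmetric] r by simp
  also have "\<dots> = (1 - r ^ n + r ^ n * (c * r)) / c" using assms by (simp add: field_simps)
  also have "\<dots> = (1 - r ^ Suc n) / c" by (simp add: cr algebra_simps)
  finally show ?case by (simp only: r_def)
qed

lemma binom_sum1:
  fixes u x :: real
  shows "(\<Sum>n = 1..M. real (M choose n) * u ^ (M - n) * x ^ n) = (u + x) ^ M - u ^ M"
proof -
  have "(u + x) ^ M = (\<Sum>n\<le>M. real (M choose n) * x ^ n * u ^ (M - n))"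
    by (subst add.commute) (rule binomial_ring)
  also have "\<dots> = (\<Sum>n\<in>insert 0 {1..M}. real (M choose n) * x ^ n * u ^ (M - n))"
    by (rule sum.cong) auto
  also have "\<dots> = u ^ M + (\<Sum>n = 1..M. real (M choose n) * u ^ (M - n) * x ^ n)"
    by (subst sum.insert) (auto simp: mult_ac)
  finally show ?thesis by simp
qed

lemma binom_sum2:
  fixes u y :: real
  shows "(\<Sum>p = 0..n. real (n choose p) * (-1) ^ p * u ^ p * y ^ p) = (1 - u * y) ^ n"
proof -
  have "(1 - u * y) ^ n = ((- (u*y)) + 1) ^ n" by simp
  also have "\<dots> = (\<Sum>p\<le>n. real (n choose p) * (- (u*y)) ^ p * 1 ^ (n - p))"
    by (rule binomial_ring)
  also have "\<dots> = (\<Sum>p = 0..n. real (n choose p) * (-1) ^ p * u ^ p * y ^ p)"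
    by (rule sum.cong) (auto simp: power_minus' power_mult_distrib atLeast0AtMost)
  finally show ?thesis by simp
qed

lemma alg:
  fixes e P0 Pb \<tau> :: real
  assumes e: "e > 0" and P0: "P0 > 0" and Pb: "Pb > 0" and t: "\<tau> > 0"
  shows "(\<Sum>n = 1..M. fact M / (fact n * fact (M - n)) * exp (- (real (M - n)) * \<tau>)
              * (1 - exp (- \<tau>)) ^ n
              * (\<Sum>p = 0..n. real (n choose p) * (-1) ^ p * exp (- real p * \<tau>) / (1 - exp (- \<tau>)) ^ n
                  * ((\<Sum>l = 0..n - 1. e / P0 * Pb * exp (- e / P0 * (1 + Pb * real p * \<tau>))
                                       / (1 + e / P0 * Pb) ^ (l + 1))
                     + exp (- e / P0) - exp (- e / P0 * (1 + Pb * real p * \<tau>)))))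
          + (1 - exp (- e / P0))
       = 1 - exp (- (e / P0)) * (exp (- \<tau>) + (1 - exp (- (1 + e / P0 * Pb) * \<tau>)) / (1 + e / P0 * Pb)) ^ M"
proof -
  define a where "a = e / P0"
  define c where "c = a * Pb"
  define u where "u = exp (- \<tau>)"
  define v where "v = 1 - u"
  define w where "w = exp (- c * \<tau>)"
  define r where "r = 1 / (1 + c)"
  have a: "a > 0" using e P0 by (simp add: a_def)
  have c: "c > 0" using a Pb by (simp add: c_def)
  have u1: "u < 1" using t by (simp add: u_def)
  have v: "v > 0" using u1 by (simp add: v_def)
  have expa: "\<And>p::nat. exp (- e / P0 * (1 + Pb * real p * \<tau>)) = exp (- a) * w ^ p"
  proof -
    fix p :: nat
    have "- e / P0 * (1 + Pb * real p * \<tau>) = - a + real p * (- c * \<tau>)"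
      by (simp add: a_def c_def algebra_simps)
    then show "exp (- e / P0 * (1 + Pb * real p * \<tau>)) = exp (- a) * w ^ p"
      by (simp only: exp_add exp_of_nat_mult w_def)
  qed
  have expu: "\<And>p::nat. exp (- real p * \<tau>) = u ^ p"
    by (simp add: u_def flip: exp_of_nat_mult)
  have bracket: "\<And>n p. n \<ge> 1 \<Longrightarrow>
     (\<Sum>l = 0..n - 1. e / P0 * Pb * exp (- e / P0 * (1 + Pb * real p * \<tau>)) / (1 + e / P0 * Pb) ^ (l + 1))
      + exp (- e / P0) - exp (- e / P0 * (1 + Pb * real p * \<tau>)) = exp (- a) * (1 - r ^ n * w ^ p)"
  proof -
    fix n p :: nat assume n: "n \<ge> 1"
    have "(\<Sum>l = 0..n - 1. e / P0 * Pb * exp (- e / P0 * (1 + Pb * real p * \<tau>)) / (1 + e / P0 * Pb) ^ (l + 1))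
        = c * exp (- a) * w ^ p * (\<Sum>l<n. 1 / (1 + c) ^ (l + 1))"
      unfolding sum_distrib_left expa
      apply (rule sum.reindex_bij_witness[of _ id id])
      using n by (auto simp: a_def c_def)
    also have "\<dots> = exp (- a) * w ^ p * (1 - r ^ n)"
      using c by (subst geom_aux[OF c]) (simp add: r_def)
    finally show "?thesis n p" using expa[of p] by (simp add: a_def algebra_simps)
  qed
  have inner: "\<And>n. n \<ge> 1 \<Longrightarrow>
      (\<Sum>p = 0..n. real (n choose p) * (-1) ^ p * exp (- real p * \<tau>) / (1 - exp (- \<tau>)) ^ n
                  * ((\<Sum>l = 0..n - 1. e / P0 * Pb * exp (- e / P0 * (1 + Pb * real p * \<tau>))
                                       / (1 + e / P0 * Pb) ^ (l + 1))
                     + exp (- e / P0) - exp (- e / P0 * (1 + Pb * real p * \<tau>))))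
      = exp (- a) / v ^ n * (v ^ n - (r * (1 - u * w)) ^ n)"
  proof -
    fix n :: nat assume n: "n \<ge> 1"
    have "(\<Sum>p = 0..n. real (n choose p) * (-1) ^ p * exp (- real p * \<tau>) / (1 - exp (- \<tau>)) ^ n
                  * ((\<Sum>l = 0..n - 1. e / P0 * Pb * exp (- e / P0 * (1 + Pb * real p * \<tau>))
                                       / (1 + e / P0 * Pb) ^ (l + 1))
                     + exp (- e / P0) - exp (- e / P0 * (1 + Pb * real p * \<tau>))))
        = (\<Sum>p = 0..n. exp (- a) / v ^ n * (real (n choose p) * (-1) ^ p * u ^ p * 1 ^ p
              - r ^ n * (real (n choose p) * (-1) ^ p * u ^ p * w ^ p)))"
    proof (rule sum.cong)
      fix p assume "p \<in> {0..n}"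
      have "real (n choose p) * (-1) ^ p * exp (- real p * \<tau>) / (1 - exp (- \<tau>)) ^ n
                  * ((\<Sum>l = 0..n - 1. e / P0 * Pb * exp (- e / P0 * (1 + Pb * real p * \<tau>))
                                       / (1 + e / P0 * Pb) ^ (l + 1))
                     + exp (- e / P0) - exp (- e / P0 * (1 + Pb * real p * \<tau>)))
           = real (n choose p) * (-1) ^ p * u ^ p / v ^ n * (exp (- a) * (1 - r ^ n * w ^ p))"
        by (simp only: bracket[OF n] expu u_def[symmetric] v_def[symmetric])
      also have "\<dots> = exp (- a) / v ^ n * (real (n choose p) * (-1) ^ p * u ^ p * 1 ^ p
              - r ^ n * (real (n choose p) * (-1) ^ p * u ^ p * w ^ p))"
        by (simp add: field_simps)
      finally show "real (n choose p) * (-1) ^ p * exp (- real p * \<tau>) / (1 - exp (- \<tau>)) ^ n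
                  * ((\<Sum>l = 0..n - 1. e / P0 * Pb * exp (- e / P0 * (1 + Pb * real p * \<tau>))
                                       / (1 + e / P0 * Pb) ^ (l + 1))
                     + exp (- e / P0) - exp (- e / P0 * (1 + Pb * real p * \<tau>)))
           = exp (- a) / v ^ n * (real (n choose p) * (-1) ^ p * u ^ p * 1 ^ p
              - r ^ n * (real (n choose p) * (-1) ^ p * u ^ p * w ^ p))" .
    qed simp
    also have "\<dots> = exp (- a) / v ^ n * ((1 - u * 1) ^ n - r ^ n * (1 - u * w) ^ n)"
      by (simp only: sum_distrib_left[symmetric] sum_subtractf binom_sum2 flip: sum_distrib_left)
    finally show "?thesis n" by (simp add: v_def power_mult_distrib)
  qed
  have "(\<Sum>n = 1..M. fact M / (fact n * fact (M - n)) * exp (- (real (M - n)) * \<tau>)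
              * (1 - exp (- \<tau>)) ^ n
              * (\<Sum>p = 0..n. real (n choose p) * (-1) ^ p * exp (- real p * \<tau>) / (1 - exp (- \<tau>)) ^ n
                  * ((\<Sum>l = 0..n - 1. e / P0 * Pb * exp (- e / P0 * (1 + Pb * real p * \<tau>))
                                       / (1 + e / P0 * Pb) ^ (l + 1))
                     + exp (- e / P0) - exp (- e / P0 * (1 + Pb * real p * \<tau>)))))
      = (\<Sum>n = 1..M. exp (- a) * (real (M choose n) * u ^ (M - n) * v ^ n
            - real (M choose n) * u ^ (M - n) * (r * (1 - u * w)) ^ n))"
  proof (rule sum.cong)
    fix n assume n: "n \<in> {1..M}"
    then have "fact M / (fact n * fact (M - n)) = real (M choose n)"
      by (simp add: binomial_fact)
    then show "fact M / (fact n * fact (M - n)) * exp (- (real (M - n)) * \<tau>) * (1 - exp (- \<tau>)) ^ n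
              * (\<Sum>p = 0..n. real (n choose p) * (-1) ^ p * exp (- real p * \<tau>) / (1 - exp (- \<tau>)) ^ n
                  * ((\<Sum>l = 0..n - 1. e / P0 * Pb * exp (- e / P0 * (1 + Pb * real p * \<tau>))
                                       / (1 + e / P0 * Pb) ^ (l + 1))
                     + exp (- e / P0) - exp (- e / P0 * (1 + Pb * real p * \<tau>))))
         = exp (- a) * (real (M choose n) * u ^ (M - n) * v ^ n
            - real (M choose n) * u ^ (M - n) * (r * (1 - u * w)) ^ n)"
      using n v apply (subst inner) apply simp
      apply (simp only: expu u_def[symmetric] v_def[symmetric])
      by (simp add: field_simps)
  qed simp
  also have "\<dots> = exp (- a) * (((u + v) ^ M - u ^ M) - ((u + r * (1 - u * w)) ^ M - u ^ M))"
    by (simp only: sum_distrib_left[symmetric] sum_subtractf binom_sum1)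
  also have "\<dots> = exp (- a) * (1 - (u + r * (1 - u * w)) ^ M)"
    by (simp add: v_def)
  finally have main: "(\<Sum>n = 1..M. fact M / (fact n * fact (M - n)) * exp (- (real (M - n)) * \<tau>)
              * (1 - exp (- \<tau>)) ^ n
              * (\<Sum>p = 0..n. real (n choose p) * (-1) ^ p * exp (- real p * \<tau>) / (1 - exp (- \<tau>)) ^ n
                  * ((\<Sum>l = 0..n - 1. e / P0 * Pb * exp (- e / P0 * (1 + Pb * real p * \<tau>))
                                       / (1 + e / P0 * Pb) ^ (l + 1))
                     + exp (- e / P0) - exp (- e / P0 * (1 + Pb * real p * \<tau>)))))
      = exp (- a) * (1 - (u + r * (1 - u * w)) ^ M)" .
  have uw: "u * w = exp (- (1 + c) * \<tau>)"
    by (simp add: u_def w_def flip: exp_add) (simp add: algebra_simps)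
  have q: "u + r * (1 - u * w) = exp (- \<tau>) + (1 - exp (- (1 + e / P0 * Pb) * \<tau>)) / (1 + e / P0 * Pb)"
    unfolding uw by (simp add: r_def u_def c_def a_def)
  show ?thesis
    unfolding main q by (simp add: a_def right_diff_distrib)
qed



lemma take_filter_sorted:
  fixes ys :: "real list"
  assumes "sorted ys"
  shows "take (length (filter (\<lambda>x. x < t) ys)) ys = filter (\<lambda>x. x < t) ys"
  using assms
proof (induction ys)
  case Nil then show ?case by simp
next
  case (Cons y ys)
  show ?case
  proof (cases "y < t")
    case True then show ?thesis using Cons by simp
  next
    case False
    then have "filter (\<lambda>x. x < t) ys = []" using Cons.prems
      by (auto simp: filter_empty_conv)
    then show ?thesis using False by simp
  qed
qed

lemma admitted_gain_sum_eq:
  "admitted_gain_sum M \<tau> g = (\<Sum>m\<in>{1..M}. if g m < \<tau> then g m else 0)"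
proof -
  define xs where "xs = map g [1..<M+1]"
  define ys where "ys = sort xs"
  define N where "N = admitted_count M \<tau> g"
  have "N = card (set (filter (\<lambda>m. g m < \<tau>) [1..<M+1]))"
    unfolding N_def admitted_count_def by (rule arg_cong[where f=card]) auto
  also have "\<dots> = length (filter (\<lambda>m. g m < \<tau>) [1..<M+1])"
    by (rule distinct_card) simp
  also have "\<dots> = length (filter (\<lambda>x. x < \<tau>) xs)"
    by (simp add: xs_def filter_map comp_def)
  also have "\<dots> = length (filter (\<lambda>x. x < \<tau>) ys)"
    unfolding ys_def by (metis mset_filter mset_sort size_mset)
  finally have N: "N = length (filter (\<lambda>x. x < \<tau>) ys)" .
  have Nle: "N \<le> length ys" using N by simp
  have "admitted_gain_sum M \<tau> g = (\<Sum>j = 1..N. ys ! (j - 1))"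
    by (simp add: admitted_gain_sum_def order_stat_def N_def xs_def ys_def)
  also have "\<dots> = (\<Sum>j<N. ys ! j)"
    by (rule sum.reindex_bij_witness[of _ Suc "\<lambda>j. j - 1"]) auto
  also have "\<dots> = sum_list (take N ys)"
    using Nle by (simp add: sum_list_sum_nth atLeast0LessThan min_def)
  also have "\<dots> = sum_list (filter (\<lambda>x. x < \<tau>) ys)"
    unfolding N by (subst take_filter_sorted) (auto simp: ys_def)
  also have "\<dots> = sum_list (filter (\<lambda>x. x < \<tau>) xs)"
    unfolding ys_def by (metis mset_filter mset_sort sum_mset_sum_list)
  also have "\<dots> = sum_list (map (\<lambda>m. if g m < \<tau> then g m else 0) [1..<M+1])"
    by (simp add: xs_def filter_map sum_list_map_filter' comp_def)
  also have "\<dots> = (\<Sum>m\<in>{1..M}. if g m < \<tau> then g m else 0)"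
    by (subst sum_list_distinct_conv_sum_set) (auto intro: sum.cong)
  finally show ?thesis .
qed


lemma exp_density_measurable:
  assumes "distributed \<Omega> lborel X (exponential_density 1)"
  shows "X \<in> borel_measurable \<Omega>"
  using distributed_measurable[OF assms] by (simp add: measurable_lborel2)

lemma exp_trunc_integral:
  fixes X :: "'a \<Rightarrow> real"
  assumes P: "prob_space \<Omega>" and D: "distributed \<Omega> lborel X (exponential_density 1)"
    and s: "0 \<le> s" and k: "0 \<le> k"
  shows "(\<integral>\<omega>. indicator {0..<s} (X \<omega>) * exp (- k * X \<omega>) \<partial>\<Omega>) = (1 - exp (- (1 + k) * s)) / (1 + k)"
proof -
  have Xm[measurable]: "X \<in> borel_measurable \<Omega>" using exp_density_measurable[OF D] .
  have "(\<integral>\<omega>. indicator {0..<s} (X \<omega>) * exp (- k * X \<omega>) \<partial>\<Omega>)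
      = (\<integral>x. exponential_density 1 x * (indicator {0..<s} x * exp (- k * x)) \<partial>lborel)"
    by (rule distributed_integral[OF D, symmetric]) (auto simp: exponential_density_nonneg)
  also have "\<dots> = (\<integral>x. exp (- (1 + k) * x) * indicator {0..s} x \<partial>lborel)"
  proof (rule integral_cong_AE)
    show "AE x in lborel. exponential_density 1 x * (indicator {0..<s} x * exp (- k * x))
                = exp (- (1 + k) * x) * indicator {0..s} x"
      using AE_lborel_singleton[of s]
    proof eventually_elim
      case (elim x)
      then show ?case
        by (auto simp: exponential_density_def indicator_def algebra_simps simp flip: exp_add)
    qed
  qed auto
  also have "\<dots> = (- exp (- (1 + k) * s) / (1 + k)) - (- exp (- (1 + k) * 0) / (1 + k))"
  proof (rule integral_FTC_Icc_real)
    fix x :: real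
    show "DERIV (\<lambda>x. - exp (- (1 + k) * x) / (1 + k)) x :> exp (- (1 + k) * x)"
    proof -
      have "DERIV (\<lambda>x. - exp (- (1 + k) * x) / (1 + k)) x :> - (exp (- (1 + k) * x) * (- (1 + k))) / (1 + k)"
        using k by (auto intro!: derivative_eq_intros)
      moreover have "- (exp (- (1 + k) * x) * (- (1 + k))) / (1 + k) = exp (- (1 + k) * x)"
        using k by (simp only: mult_minus_right minus_minus) simp
      ultimately show ?thesis by simp
    qed
  qed (use s in auto)
  also have "\<dots> = (1 - exp (- (1 + k) * s)) / (1 + k)"
    by (simp add: diff_divide_distrib)
  finally show ?thesis .
qed

lemma exp_lt_prob:
  fixes X :: "'a \<Rightarrow> real"
  assumes P: "prob_space \<Omega>" and D: "distributed \<Omega> lborel X (exponential_density 1)"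
    and t: "0 \<le> t"
  shows "measure \<Omega> {\<omega> \<in> space \<Omega>. X \<omega> < t} = 1 - exp (- t)"
proof -
  interpret prob_space \<Omega> by (rule P)
  have Xm[measurable]: "X \<in> borel_measurable \<Omega>" using exp_density_measurable[OF D] .
  have le: "measure \<Omega> {\<omega> \<in> space \<Omega>. X \<omega> \<le> t} = 1 - exp (- t)"
    using exponential_distributedD_le[OF D t] by simp
  have "emeasure \<Omega> (X -` {t} \<inter> space \<Omega>) = (\<integral>\<^sup>+x. ennreal (exponential_density 1 x) * indicator {t} x \<partial>lborel)"
    by (rule distributed_emeasure[OF D]) simp
  also have "\<dots> = (\<integral>\<^sup>+x. 0 \<partial>lborel)"
    by (simp add: nn_integral_indicator_singleton)
  finally have "emeasure \<Omega> (X -` {t} \<inter> space \<Omega>) = 0" by simp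
  then have eq0: "measure \<Omega> {\<omega> \<in> space \<Omega>. X \<omega> = t} = 0"
    by (simp add: measure_def vimage_def Int_def conj_commute)
  have eqset: "{\<omega> \<in> space \<Omega>. X \<omega> < t} = {\<omega> \<in> space \<Omega>. X \<omega> \<le> t} - {\<omega> \<in> space \<Omega>. X \<omega> = t}"
    by auto
  have "{\<omega> \<in> space \<Omega>. X \<omega> \<le> t} \<in> sets \<Omega>" "{\<omega> \<in> space \<Omega>. X \<omega> = t} \<in> sets \<Omega>" by measurable
  then have "measure \<Omega> {\<omega> \<in> space \<Omega>. X \<omega> < t} = measure \<Omega> {\<omega> \<in> space \<Omega>. X \<omega> \<le> t} - measure \<Omega> {\<omega> \<in> space \<Omega>. X \<omega> = t}"
    unfolding eqset by (intro finite_measure_Diff) auto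
  then show ?thesis using le eq0 by simp
qed


lemma exp_trunc_mgf:
  fixes X :: "'a \<Rightarrow> real"
  assumes P: "prob_space \<Omega>" and D: "distributed \<Omega> lborel X (exponential_density 1)"
    and t: "0 < \<tau>" and c: "0 \<le> c"
  shows "(\<integral>\<omega>. exp (- c * (if 0 \<le> X \<omega> \<and> X \<omega> < \<tau> then X \<omega> else 0)) \<partial>\<Omega>)
       = exp (- \<tau>) + (1 - exp (- (1 + c) * \<tau>)) / (1 + c)"
proof -
  interpret prob_space \<Omega> by (rule P)
  have Xm[measurable]: "X \<in> borel_measurable \<Omega>" using exp_density_measurable[OF D] .
  have pt: "\<And>\<omega>. exp (- c * (if 0 \<le> X \<omega> \<and> X \<omega> < \<tau> then X \<omega> else 0))
      = indicator {0..<\<tau>} (X \<omega>) * exp (- c * X \<omega>) + (1 - indicator {0..<\<tau>} (X \<omega>) * exp (- 0 * X \<omega>))"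
    by (auto simp: indicator_def)
  have i1: "integrable \<Omega> (\<lambda>\<omega>. indicator {0..<\<tau>} (X \<omega>) * exp (- k * X \<omega>))" if "0 \<le> k" for k :: real
  proof (rule integrable_const_bound[where B=1])
    show "AE x in \<Omega>. norm (indicator {0..<\<tau>} (X x) * exp (- k * X x)) \<le> (1::real)"
      using that by (intro AE_I2) (auto simp: indicator_def mult_nonneg_nonneg)
  qed measurable
  have "(\<integral>\<omega>. exp (- c * (if 0 \<le> X \<omega> \<and> X \<omega> < \<tau> then X \<omega> else 0)) \<partial>\<Omega>)
      = (\<integral>\<omega>. indicator {0..<\<tau>} (X \<omega>) * exp (- c * X \<omega>) \<partial>\<Omega>)
        + (1 - (\<integral>\<omega>. indicator {0..<\<tau>} (X \<omega>) * exp (- 0 * X \<omega>) \<partial>\<Omega>))"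
    unfolding pt using i1[OF c] i1[of 0]
    by (simp add: prob_space del: mult_zero_left minus_zero)
  also have "\<dots> = (1 - exp (- (1 + c) * \<tau>)) / (1 + c) + (1 - (1 - exp (- (1 + 0) * \<tau>)) / (1 + 0))"
    using t c by (simp only: exp_trunc_integral[OF P D])
  finally show ?thesis by simp
qed

lemma indep_outage:
  fixes X T :: "'a \<Rightarrow> real"
  assumes P: "prob_space \<Omega>" and D: "distributed \<Omega> lborel X (exponential_density 1)"
    and Tm: "T \<in> borel_measurable \<Omega>" and Tpos: "\<And>\<omega>. \<omega> \<in> space \<Omega> \<Longrightarrow> 0 \<le> T \<omega>"
    and ind: "prob_space.indep_var \<Omega> borel X borel T"
  shows "measure \<Omega> {\<omega> \<in> space \<Omega>. X \<omega> < T \<omega>} = (\<integral>\<omega>. 1 - exp (- T \<omega>) \<partial>\<Omega>)"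
proof -
  interpret prob_space \<Omega> by (rule P)
  have Xm[measurable]: "X \<in> borel_measurable \<Omega>" using exp_density_measurable[OF D] .
  note Tm[measurable]
  let ?mX = "distr \<Omega> borel X" and ?mT = "distr \<Omega> borel T"
  interpret pX: prob_space ?mX by (rule prob_space_distr) simp
  interpret pT: prob_space ?mT by (rule prob_space_distr) simp
  interpret pair_sigma_finite ?mX ?mT
    by (intro pair_sigma_finite.intro pX.sigma_finite_measure_axioms pT.sigma_finite_measure_axioms)
  have eq: "?mX \<Otimes>\<^sub>M ?mT = distr \<Omega> (borel \<Otimes>\<^sub>M borel) (\<lambda>\<omega>. (X \<omega>, T \<omega>))"
    using ind unfolding indep_var_distribution_eq by simp
  define A where "A = {p. fst p < (snd p :: real)}"
  have "open A" unfolding A_def by (intro open_Collect_less continuous_intros)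
  then have A[measurable]: "A \<in> sets (borel \<Otimes>\<^sub>M borel)" unfolding borel_prod by (rule borel_open)
  have "emeasure (distr \<Omega> (borel \<Otimes>\<^sub>M borel) (\<lambda>\<omega>. (X \<omega>, T \<omega>))) A
      = emeasure \<Omega> ((\<lambda>\<omega>. (X \<omega>, T \<omega>)) -` A \<inter> space \<Omega>)"
    by (rule emeasure_distr[OF measurable_Pair[OF Xm Tm] A])
  moreover have "(\<lambda>\<omega>. (X \<omega>, T \<omega>)) -` A \<inter> space \<Omega> = {\<omega> \<in> space \<Omega>. X \<omega> < T \<omega>}"
    by (auto simp: A_def)
  ultimately have "emeasure \<Omega> {\<omega> \<in> space \<Omega>. X \<omega> < T \<omega>} = emeasure (distr \<Omega> (borel \<Otimes>\<^sub>M borel) (\<lambda>\<omega>. (X \<omega>, T \<omega>))) A"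
    by simp
  also have "\<dots> = emeasure (?mX \<Otimes>\<^sub>M ?mT) A" by (simp add: eq)
  also have "\<dots> = (\<integral>\<^sup>+t. emeasure ?mX ((\<lambda>x. (x, t)) -` A) \<partial>?mT)"
  proof (rule emeasure_pair_measure_alt2)
    show "A \<in> sets (?mX \<Otimes>\<^sub>M ?mT)"
      unfolding sets_pair_measure_cong[OF sets_distr sets_distr] by (rule A)
  qed
  also have "\<dots> = (\<integral>\<^sup>+t. ennreal (1 - exp (- t)) \<partial>?mT)"
  proof (rule nn_integral_cong_AE)
    have "AE t in ?mT. 0 \<le> t"
      by (subst AE_distr_iff) (auto intro!: AE_I2 Tpos)
    then show "AE t in ?mT. emeasure ?mX ((\<lambda>x. (x, t)) -` A) = ennreal (1 - exp (- t))"
    proof eventually_elim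
      case (elim t)
      have "emeasure ?mX ((\<lambda>x. (x, t)) -` A) = emeasure \<Omega> {\<omega> \<in> space \<Omega>. X \<omega> < t}"
        by (subst emeasure_distr) (auto simp: A_def space_pair_measure intro!: arg_cong[where f="emeasure \<Omega>"])
      also have "\<dots> = ennreal (1 - exp (- t))"
        using exp_lt_prob[OF P D elim] by (simp add: emeasure_eq_measure)
      finally show ?case .
    qed
  qed
  also have "\<dots> = (\<integral>\<^sup>+\<omega>. ennreal (1 - exp (- T \<omega>)) \<partial>\<Omega>)"
    by (subst nn_integral_distr) auto
  also have "\<dots> = ennreal (\<integral>\<omega>. 1 - exp (- T \<omega>) \<partial>\<Omega>)"
  proof (rule nn_integral_eq_integral)
    show "integrable \<Omega> (\<lambda>\<omega>. 1 - exp (- T \<omega>))"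
    proof (rule integrable_const_bound[where B=1])
      show "AE x in \<Omega>. norm (1 - exp (- T x)) \<le> (1::real)"
        by (intro AE_I2) (auto dest!: Tpos)
    qed measurable
    show "AE x in \<Omega>. 0 \<le> 1 - exp (- T x)"
      by (intro AE_I2) (auto dest!: Tpos)
  qed
  finally have "ennreal (measure \<Omega> {\<omega> \<in> space \<Omega>. X \<omega> < T \<omega>}) = ennreal (\<integral>\<omega>. 1 - exp (- T \<omega>) \<partial>\<Omega>)"
    by (simp add: emeasure_eq_measure)
  moreover have "0 \<le> (\<integral>\<omega>. 1 - exp (- T \<omega>) \<partial>\<Omega>)"
    by (intro integral_nonneg_AE AE_I2) (auto dest!: Tpos)
  ultimately show ?thesis by simp
qed


theorem theorem1:
  fixes \<Omega> :: "'a measure" and h :: "nat \<Rightarrow> 'a \<Rightarrow> real"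
    and M :: nat and \<tau> P0 Pb R0 :: real
  assumes "prob_space \<Omega>"
    and "M \<ge> 1" and "\<tau> > 0" and "P0 > 0" and "Pb > 0" and "R0 > 0"
    and "prob_space.indep_vars \<Omega> (\<lambda>_. borel) h {0..M}"
    and "\<And>m. m \<in> {0..M} \<Longrightarrow> distributed \<Omega> lborel (h m) (exponential_density 1)"
  shows "measure \<Omega> {\<omega> \<in> space \<Omega>.
            log 2 (1 + h 0 \<omega> * P0 / (admitted_gain_sum M \<tau> (\<lambda>m. h m \<omega>) * Pb + 1)) < R0}
       = (let \<epsilon>\<^sub>0 = 2 powr R0 - 1 in
          (\<Sum>n = 1..M. fact M / (fact n * fact (M - n)) * exp (- (real (M - n)) * \<tau>)
              * (1 - exp (- \<tau>)) ^ n
              * (\<Sum>p = 0..n. real (n choose p) * (-1) ^ p * exp (- real p * \<tau>) / (1 - exp (- \<tau>)) ^ n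
                  * ((\<Sum>l = 0..n - 1. \<epsilon>\<^sub>0 / P0 * Pb * exp (- \<epsilon>\<^sub>0 / P0 * (1 + Pb * real p * \<tau>))
                                       / (1 + \<epsilon>\<^sub>0 / P0 * Pb) ^ (l + 1))
                     + exp (- \<epsilon>\<^sub>0 / P0) - exp (- \<epsilon>\<^sub>0 / P0 * (1 + Pb * real p * \<tau>)))))
          + (1 - exp (- \<epsilon>\<^sub>0 / P0)))"
proof -
  note P = assms(1)
  interpret prob_space \<Omega> by (rule P)
  note ind = assms(7) and dist = assms(8)
  define e where "e = 2 powr R0 - (1::real)"
  have e: "e > 0" using assms(6) by (simp add: e_def)
  define a where "a = e / P0"
  have a: "a > 0" using e assms(4) by (simp add: a_def)
  define f :: "real \<Rightarrow> real" where "f x = (if 0 \<le> x \<and> x < \<tau> then x else 0)" for x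
  have f_nn: "0 \<le> f x" for x by (simp add: f_def)
  have f_meas[measurable]: "f \<in> borel_measurable borel" unfolding f_def by measurable
  define D where "D \<omega> = (\<Sum>m\<in>{1..M}. f (h m \<omega>))" for \<omega>
  define T where "T \<omega> = a * (1 + Pb * D \<omega>)" for \<omega>
  have hm: "h m \<in> borel_measurable \<Omega>" if "m \<in> {0..M}" for m
    using exp_density_measurable[OF dist[OF that]] .
  have h0[measurable]: "h 0 \<in> borel_measurable \<Omega>" using hm by simp
  have Dm[measurable]: "D \<in> borel_measurable \<Omega>"
    unfolding D_def
  proof (rule borel_measurable_sum)
    fix m assume "m \<in> {1..M}"
    then have [measurable]: "h m \<in> borel_measurable \<Omega>" using hm by auto
    show "(\<lambda>x. f (h m x)) \<in> borel_measurable \<Omega>" by measurable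
  qed
  have Tm[measurable]: "T \<in> borel_measurable \<Omega>" unfolding T_def by measurable
  have Dnn: "0 \<le> D \<omega>" for \<omega> unfolding D_def by (intro sum_nonneg f_nn)
  have Tnn: "0 \<le> T \<omega>" for \<omega> unfolding T_def using a assms(5) Dnn[of \<omega>] by simp
  define D0 where "D0 \<omega> = (\<Sum>m\<in>{1..M}. if h m \<omega> < \<tau> then h m \<omega> else 0)" for \<omega>
  have D0m[measurable]: "D0 \<in> borel_measurable \<Omega>"
    unfolding D0_def
  proof (rule borel_measurable_sum)
    fix m assume "m \<in> {1..M}"
    then have [measurable]: "h m \<in> borel_measurable \<Omega>" using hm by auto
    show "(\<lambda>x. if h m x < \<tau> then h m x else 0) \<in> borel_measurable \<Omega>" by measurable
  qed
  have set1: "{\<omega> \<in> space \<Omega>. log 2 (1 + h 0 \<omega> * P0 / (admitted_gain_sum M \<tau> (\<lambda>m. h m \<omega>) * Pb + 1)) < R0}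
      = {\<omega> \<in> space \<Omega>. log 2 (1 + h 0 \<omega> * P0 / (D0 \<omega> * Pb + 1)) < R0}"
    by (simp add: admitted_gain_sum_eq D0_def)
  have AEpos: "AE \<omega> in \<Omega>. \<forall>m\<in>{0..M}. 0 < h m \<omega>"
  proof (rule AE_finite_allI)
    fix m assume m: "m \<in> {0..M}"
    note [measurable] = hm[OF m]
    have "prob {\<omega> \<in> space \<Omega>. h m \<omega> \<le> 0} = 0"
      using exponential_distributedD_le[OF dist[OF m], of 0] by simp
    then have "AE \<omega> in \<Omega>. \<omega> \<notin> {\<omega> \<in> space \<Omega>. h m \<omega> \<le> 0}"
      by (subst prob_eq_0[symmetric]) auto
    then show "AE \<omega> in \<Omega>. 0 < h m \<omega>"
      by (rule AE_mp) (intro AE_I2, auto)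
  qed simp
  have "measure \<Omega> {\<omega> \<in> space \<Omega>. log 2 (1 + h 0 \<omega> * P0 / (D0 \<omega> * Pb + 1)) < R0}
      = measure \<Omega> {\<omega> \<in> space \<Omega>. h 0 \<omega> < T \<omega>}"
  proof (rule measure_eq_AE)
    show "AE \<omega> in \<Omega>. (\<omega> \<in> {\<omega> \<in> space \<Omega>. log 2 (1 + h 0 \<omega> * P0 / (D0 \<omega> * Pb + 1)) < R0})
          = (\<omega> \<in> {\<omega> \<in> space \<Omega>. h 0 \<omega> < T \<omega>})"
      using AEpos
    proof (rule AE_mp, intro AE_I2 impI)
      fix \<omega> assume pos: "\<forall>m\<in>{0..M}. 0 < h m \<omega>"
      have "D0 \<omega> = D \<omega>"
        unfolding D0_def D_def f_def
      proof (intro sum.cong refl)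
        fix m assume "m \<in> {1..M}"
        then have "0 < h m \<omega>" using pos by auto
        then show "(if h m \<omega> < \<tau> then h m \<omega> else 0) = (if 0 \<le> h m \<omega> \<and> h m \<omega> < \<tau> then h m \<omega> else 0)"
          by simp
      qed
      then have D0nn: "0 \<le> D0 \<omega>" using Dnn by simp
      have h0p: "0 < h 0 \<omega>" using pos by auto
      have den: "0 < D0 \<omega> * Pb + 1" using D0nn assms(5) by (simp add: add_nonneg_pos)
      have y: "0 < 1 + h 0 \<omega> * P0 / (D0 \<omega> * Pb + 1)"
        using h0p assms(4) den by (simp add: add_pos_nonneg)
      have "log 2 (1 + h 0 \<omega> * P0 / (D0 \<omega> * Pb + 1)) < R0
          \<longleftrightarrow> 1 + h 0 \<omega> * P0 / (D0 \<omega> * Pb + 1) < 2 powr R0"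
        using y by (simp add: log_less_iff)
      also have "\<dots> \<longleftrightarrow> h 0 \<omega> * P0 / (D0 \<omega> * Pb + 1) < e" unfolding e_def by linarith
      also have "\<dots> \<longleftrightarrow> h 0 \<omega> * P0 < e * (D0 \<omega> * Pb + 1)" using den by (simp add: pos_divide_less_eq)
      also have "\<dots> \<longleftrightarrow> h 0 \<omega> < e / P0 * (D0 \<omega> * Pb + 1)"
        using assms(4) by (simp add: pos_less_divide_eq field_simps)
      also have "\<dots> \<longleftrightarrow> h 0 \<omega> < T \<omega>"
        unfolding T_def a_def \<open>D0 \<omega> = D \<omega>\<close> by (simp add: algebra_simps)
      finally show "(\<omega> \<in> {\<omega> \<in> space \<Omega>. log 2 (1 + h 0 \<omega> * P0 / (D0 \<omega> * Pb + 1)) < R0})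
          = (\<omega> \<in> {\<omega> \<in> space \<Omega>. h 0 \<omega> < T \<omega>})" by auto
    qed
  qed measurable
  also have "\<dots> = (\<integral>\<omega>. 1 - exp (- T \<omega>) \<partial>\<Omega>)"
  proof (rule indep_outage[OF P dist Tm Tnn])
    show "0 \<in> {0..M}" by simp
    have iv: "indep_var (PiM {0} (\<lambda>_. borel)) (\<lambda>\<omega>. restrict (\<lambda>i. h i \<omega>) {0})
                        (PiM {1..M} (\<lambda>_. borel)) (\<lambda>\<omega>. restrict (\<lambda>i. h i \<omega>) {1..M})"
      by (rule indep_var_restrict[OF ind]) auto
    have m1: "(\<lambda>x. x 0) \<in> PiM {0} (\<lambda>_. borel) \<rightarrow>\<^sub>M (borel :: real measure)"
      by (rule measurable_component_singleton) simp
    have m2: "(\<lambda>x. a * (1 + Pb * (\<Sum>m\<in>{1..M}. f (x m)))) \<in> PiM {1..M} (\<lambda>_. borel) \<rightarrow>\<^sub>M (borel :: real measure)"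
    proof -
      have "(\<lambda>x. \<Sum>m\<in>{1..M}. f (x m)) \<in> PiM {1..M} (\<lambda>_. borel) \<rightarrow>\<^sub>M (borel :: real measure)"
      proof (rule borel_measurable_sum)
        fix m assume m: "m \<in> {1..M}"
        have [measurable]: "(\<lambda>x. x m) \<in> PiM {1..M} (\<lambda>_. borel) \<rightarrow>\<^sub>M (borel :: real measure)"
          by (rule measurable_component_singleton) (rule m)
        show "(\<lambda>x. f (x m)) \<in> borel_measurable (PiM {1..M} (\<lambda>_. borel))" by measurable
      qed
      then show ?thesis by measurable
    qed
    have "indep_var borel ((\<lambda>x. x 0) \<circ> (\<lambda>\<omega>. restrict (\<lambda>i. h i \<omega>) {0}))
                    borel ((\<lambda>x. a * (1 + Pb * (\<Sum>m\<in>{1..M}. f (x m)))) \<circ> (\<lambda>\<omega>. restrict (\<lambda>i. h i \<omega>) {1..M}))"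
      by (rule indep_var_compose[OF iv m1 m2])
    moreover have "(\<lambda>x. x 0) \<circ> (\<lambda>\<omega>. restrict (\<lambda>i. h i \<omega>) {0}) = h 0" by (auto simp: fun_eq_iff)
    moreover have "(\<lambda>x. a * (1 + Pb * (\<Sum>m\<in>{1..M}. f (x m)))) \<circ> (\<lambda>\<omega>. restrict (\<lambda>i. h i \<omega>) {1..M}) = T"
      by (auto simp: fun_eq_iff T_def D_def intro!: sum.cong)
    ultimately show "indep_var borel (h 0) borel T" by simp
  qed
  also have "\<dots> = 1 - exp (- a) * (\<integral>\<omega>. (\<Prod>m\<in>{1..M}. exp (- (e / P0 * Pb) * f (h m \<omega>))) \<partial>\<Omega>)"
  proof -
    have pt: "exp (- T \<omega>) = exp (- a) * (\<Prod>m\<in>{1..M}. exp (- (e / P0 * Pb) * f (h m \<omega>)))" for \<omega>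
    proof -
      have s1: "(\<Sum>m\<in>{1..M}. - (e / P0 * Pb) * f (h m \<omega>)) = - (e / P0 * Pb) * D \<omega>"
        by (simp only: D_def sum_distrib_left)
      have "- T \<omega> = - a + (\<Sum>m\<in>{1..M}. - (e / P0 * Pb) * f (h m \<omega>))"
        unfolding s1 by (simp add: T_def a_def algebra_simps)
      then show ?thesis by (simp only: exp_add exp_sum[OF finite_atLeastAtMost])
    qed
    have int: "integrable \<Omega> (\<lambda>\<omega>. exp (- T \<omega>))"
    proof (rule integrable_const_bound[where B=1])
      show "AE x in \<Omega>. norm (exp (- T x)) \<le> (1::real)"
        using Tnn by (intro AE_I2) auto
    qed measurable
    show ?thesis
      using int by (simp add: pt prob_space)
  qed
  also have "\<dots> = 1 - exp (- a) * (\<Prod>m\<in>{1..M}. (\<integral>\<omega>. exp (- (e / P0 * Pb) * f (h m \<omega>)) \<partial>\<Omega>))"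
  proof -
    have ivs: "indep_vars (\<lambda>_. borel) (\<lambda>m \<omega>. exp (- (e / P0 * Pb) * f (h m \<omega>))) {1..M}"
    proof (rule indep_vars_compose2[where X=h and M'="\<lambda>_. borel"])
      show "indep_vars (\<lambda>_. borel) h {1..M}"
        by (rule indep_vars_subset[OF ind]) auto
      fix m assume "m \<in> {1..M}"
      show "(\<lambda>x. exp (- (e / P0 * Pb) * f x)) \<in> borel \<rightarrow>\<^sub>M borel" by measurable
    qed
    have "(\<integral>\<omega>. (\<Prod>m\<in>{1..M}. exp (- (e / P0 * Pb) * f (h m \<omega>))) \<partial>\<Omega>)
        = (\<Prod>m\<in>{1..M}. (\<integral>\<omega>. exp (- (e / P0 * Pb) * f (h m \<omega>)) \<partial>\<Omega>))"
    proof (rule indep_vars_lebesgue_integral[OF _ ivs])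
      fix m assume m: "m \<in> {1..M}"
      then have [measurable]: "h m \<in> borel_measurable \<Omega>" using hm by auto
      show "integrable \<Omega> (\<lambda>\<omega>. exp (- (e / P0 * Pb) * f (h m \<omega>)))"
      proof (rule integrable_const_bound[where B=1])
        show "AE x in \<Omega>. norm (exp (- (e / P0 * Pb) * f (h m x))) \<le> (1::real)"
          using e assms(4,5) f_nn by (intro AE_I2) (auto simp: mult_nonneg_nonneg)
      qed measurable
    qed simp
    then show ?thesis by simp
  qed
  also have "\<dots> = 1 - exp (- a) * (exp (- \<tau>) + (1 - exp (- (1 + e / P0 * Pb) * \<tau>)) / (1 + e / P0 * Pb)) ^ M"
  proof -
    have "(\<integral>\<omega>. exp (- (e / P0 * Pb) * f (h m \<omega>)) \<partial>\<Omega>)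
        = exp (- \<tau>) + (1 - exp (- (1 + e / P0 * Pb) * \<tau>)) / (1 + e / P0 * Pb)" if m: "m \<in> {1..M}" for m
      unfolding f_def
      by (rule exp_trunc_mgf[OF P dist]) (use m assms(3-5) e in auto)
    then show ?thesis by simp
  qed
  also have "\<dots> = (let \<epsilon>\<^sub>0 = 2 powr R0 - 1 in
          (\<Sum>n = 1..M. fact M / (fact n * fact (M - n)) * exp (- (real (M - n)) * \<tau>)
              * (1 - exp (- \<tau>)) ^ n
              * (\<Sum>p = 0..n. real (n choose p) * (-1) ^ p * exp (- real p * \<tau>) / (1 - exp (- \<tau>)) ^ n
                  * ((\<Sum>l = 0..n - 1. \<epsilon>\<^sub>0 / P0 * Pb * exp (- \<epsilon>\<^sub>0 / P0 * (1 + Pb * real p * \<tau>))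
                                       / (1 + \<epsilon>\<^sub>0 / P0 * Pb) ^ (l + 1))
                     + exp (- \<epsilon>\<^sub>0 / P0) - exp (- \<epsilon>\<^sub>0 / P0 * (1 + Pb * real p * \<tau>)))))
          + (1 - exp (- \<epsilon>\<^sub>0 / P0)))"
    unfolding Let_def e_def[symmetric] a_def
    by (rule alg[OF e assms(4,5,3), symmetric])
  finally show ?thesis unfolding set1 .
qed

end
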